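(* Let $n\ge1$. If $2\le m\le\infty$, then $c_{\pi s,s+}(n,\ell_1^m)=\gamma(n)$. Consequently, $$\sup_E\frac{c_{\pi s,s+}(n,E)}{c_+(E)^n}=\sup_{E:\,c_+(E)=1}c_{\pi s,s+}(n,E)=c_{\pi s,s+}(n,\ell_1)=c_{\pi s,s+}(n,\ell_1^2)=\gamma(n),$$ where the suprema are over all ordered normed spaces $E$.
   Context: All vector spaces are real. An ordered normed space is a real normed space $E$ together with a closed convex cone $E_+\subseteq E$ (positive elements) such that $E=E_+-E_+$ and such that, writing $\|x\|_+:=\inf\{\|y\|+\|z\|: x=y-z,\ y,z\in E_+\}$, the constant $c_+(E):=\sup\{\|x\|_+:\|x\|\le1\}$ is finite; $E^+$ denotes $E$ with the norm $\|\cdot\|_+$. $E^{\vee n}$ is the space of symmetric tensors in the algebraic tensor power $E^{\otimes n}$, and $x^{\otimes n}:=x\otimes\cdots\otimes x$. For a normed space $F$, $\|\mathbf{x}\|_{\pi s,F}:=\inf\{\sum_k|a_k|\,\|x_k\|^n : \mathbf{x}=\sum_k a_k x_k^{\otimes n},\ x_k\in F\}$, and for an ordered normed space $E$, $\|\mathbf{x}\|_{\pi s+,E}:=\inf\{\sum_k|a_k|\,\|x_k\|^n : \mathbf{x}=\sum_k a_k x_k^{\otimes n},\ x_k\in E_+\}$ (finite sums, $a_k\in\mathbb{R}$). $c_{\pi s,s+}(n,E):=\sup\{\|\mathbf{x}\|_{\pi s+,E}/\|\mathbf{x}\|_{\pi s,E}:0\ne\mathbf{x}\in E^{\vee n}\}$.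 $\gamma(n)$ is the smallest constant $C$ such that $\|\mathbf{x}\|_{\pi s+,E}\le C\,\|\mathbf{x}\|_{\pi s,E^+}$ for every ordered normed space $E$ and every $\mathbf{x}\in E^{\vee n}$ (such finite constants exist). $\ell_1^m$ ($1\le m<\infty$) is $\mathbb{R}^m$ with the $\ell_1$-norm, $\ell_1^\infty=\ell_1$, ordered coordinatewise. *)

theory Defs
  imports "HOL-Analysis.Analysis" "HOL-Library.Function_Algebras"
begin

instantiation "fun" :: (type, real_vector) real_vector
begin
definition scaleR_fun :: "real \<Rightarrow> ('a \<Rightarrow> 'b) \<Rightarrow> 'a \<Rightarrow> 'b" where
  "scaleR_fun c f = (\<lambda>x. c *\<^sub>R f x)"
instance
  by standard (simp_all add: scaleR_fun_def fun_eq_iff scaleR_add_right scaleR_add_left)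
end

text \<open>An ordered normed space is represented by a triple (V, N, P): a linear subspace V
  of an ambient real vector space, a norm N on V, and the positive cone P.\<close>

definition is_norm_on :: "'a::real_vector set \<Rightarrow> ('a \<Rightarrow> real) \<Rightarrow> bool" where
  "is_norm_on V N \<longleftrightarrow>
     (\<forall>x\<in>V. 0 \<le> N x) \<and> (\<forall>x\<in>V. N x = 0 \<longleftrightarrow> x = 0) \<and>
     (\<forall>x\<in>V. \<forall>c. N (c *\<^sub>R x) = \<bar>c\<bar> * N x) \<and>
     (\<forall>x\<in>V. \<forall>y\<in>V. N (x + y) \<le> N x + N y)"

definition norm_plus :: "'a::real_vector set \<Rightarrow> ('a \<Rightarrow> real) \<Rightarrow> 'a set \<Rightarrow> 'a \<Rightarrow> real" where
  "norm_plus V N P x = Inf {N y + N z | y z. y \<in> P \<and> z \<in> P \<and> x = y - z}"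

definition c_plus :: "'a::real_vector set \<Rightarrow> ('a \<Rightarrow> real) \<Rightarrow> 'a set \<Rightarrow> real" where
  "c_plus V N P = Sup {norm_plus V N P x | x. x \<in> V \<and> N x \<le> 1}"

definition ordered_normed_space :: "'a::real_vector set \<Rightarrow> ('a \<Rightarrow> real) \<Rightarrow> 'a set \<Rightarrow> bool" where
  "ordered_normed_space V N P \<longleftrightarrow>
     subspace V \<and> is_norm_on V N \<and> P \<subseteq> V \<and>
     (\<forall>x\<in>P. \<forall>y\<in>P. x + y \<in> P) \<and> (\<forall>x\<in>P. \<forall>c::real. 0 \<le> c \<longrightarrow> c *\<^sub>R x \<in> P) \<and>
     (\<forall>s x. (\<forall>k. s k \<in> P) \<and> x \<in> V \<and> (\<lambda>k. N (s k - x)) \<longlonglongrightarrow> 0 \<longrightarrow> x \<in> P) \<and>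
     V = {y - z | y z. y \<in> P \<and> z \<in> P} \<and>
     bdd_above {norm_plus V N P x | x. x \<in> V \<and> N x \<le> 1}"

text \<open>A symmetric tensor \<open>\<Sum>\<^sub>k a\<^sub>k x\<^sub>k\<^sup>\<otimes>\<^sup>n\<close> in the algebraic
  symmetric tensor power is represented faithfully (injectively, linearly) by the function
  \<open>f \<mapsto> \<Sum>\<^sub>k a\<^sub>k f(x\<^sub>k)\<^sup>n\<close> on linear functionals f (and 0 on non-linear f).\<close>
definition symrep :: "nat \<Rightarrow> (real \<times> 'a::real_vector) list \<Rightarrow> ('a \<Rightarrow> real) \<Rightarrow> real" where
  "symrep n xs = (\<lambda>f. if linear f then (\<Sum>(a, x)\<leftarrow>xs. a * (f x) ^ n) else 0)"

definition sym_tensors :: "nat \<Rightarrow> 'a::real_vector set \<Rightarrow> (('a \<Rightarrow> real) \<Rightarrow> real) set" where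
  "sym_tensors n V = {symrep n xs | xs. snd ` set xs \<subseteq> V}"

definition proj_sym_norm :: "nat \<Rightarrow> 'a::real_vector set \<Rightarrow> ('a \<Rightarrow> real) \<Rightarrow> (('a \<Rightarrow> real) \<Rightarrow> real) \<Rightarrow> real" where
  "proj_sym_norm n S N u =
     Inf {(\<Sum>(a, x)\<leftarrow>xs. \<bar>a\<bar> * (N x) ^ n) | xs. snd ` set xs \<subseteq> S \<and> u = symrep n xs}"

abbreviation pi_s :: "nat \<Rightarrow> 'a::real_vector set \<Rightarrow> ('a \<Rightarrow> real) \<Rightarrow> (('a \<Rightarrow> real) \<Rightarrow> real) \<Rightarrow> real" where
  "pi_s n V N u \<equiv> proj_sym_norm n V N u"

abbreviation pi_s_plus :: "nat \<Rightarrow> 'a::real_vector set \<Rightarrow> ('a \<Rightarrow> real) \<Rightarrow> 'a set \<Rightarrow> (('a \<Rightarrow> real) \<Rightarrow> real) \<Rightarrow> real" where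
  "pi_s_plus n V N P u \<equiv> proj_sym_norm n P N u"

definition c_pss :: "nat \<Rightarrow> 'a::real_vector set \<Rightarrow> ('a \<Rightarrow> real) \<Rightarrow> 'a set \<Rightarrow> ereal" where
  "c_pss n V N P = (SUP u\<in>sym_tensors n V - {\<lambda>_. 0}. ereal (pi_s_plus n V N P u / pi_s n V N u))"

text \<open>\<open>\<gamma>(n)\<close> relative to ordered normed spaces living in type 'a; the true \<open>\<gamma>(n)\<close>
  is the supremum of these over all types.\<close>
definition gamma_on :: "'a::real_vector itself \<Rightarrow> nat \<Rightarrow> ereal" where
  "gamma_on _ n = (INF C\<in>{C::real. 0 \<le> C \<and>
      (\<forall>(V::'a set) N P. ordered_normed_space V N P \<longrightarrow>
         (\<forall>u\<in>sym_tensors n V. pi_s_plus n V N P u \<le> C * pi_s n V (norm_plus V N P) u))}. ereal C)"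

definition sup_ratio_on :: "'a::real_vector itself \<Rightarrow> nat \<Rightarrow> ereal" where
  "sup_ratio_on _ n = Sup {c_pss n V N P / ereal (c_plus V N P ^ n) | (V::'a set) N P.
       ordered_normed_space V N P}"

definition sup_unit_on :: "'a::real_vector itself \<Rightarrow> nat \<Rightarrow> ereal" where
  "sup_unit_on _ n = Sup {c_pss n V N P | (V::'a set) N P.
       ordered_normed_space V N P \<and> c_plus V N P = 1}"

definition l1m_V :: "nat \<Rightarrow> (nat \<Rightarrow> real) set" where
  "l1m_V m = {x. \<forall>i\<ge>m. x i = 0}"
definition l1m_N :: "nat \<Rightarrow> (nat \<Rightarrow> real) \<Rightarrow> real" where
  "l1m_N m x = (\<Sum>i<m. \<bar>x i\<bar>)"
definition l1m_P :: "nat \<Rightarrow> (nat \<Rightarrow> real) set" where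
  "l1m_P m = {x \<in> l1m_V m. \<forall>i. 0 \<le> x i}"

definition l1_V :: "(nat \<Rightarrow> real) set" where
  "l1_V = {x. summable (\<lambda>i. \<bar>x i\<bar>)}"
definition l1_N :: "(nat \<Rightarrow> real) \<Rightarrow> real" where
  "l1_N x = (\<Sum>i. \<bar>x i\<bar>)"
definition l1_P :: "(nat \<Rightarrow> real) set" where
  "l1_P = {x \<in> l1_V. \<forall>i. 0 \<le> x i}"

end

theory Submission
  imports Defs
begin


lemma alt_pow_sum:
  "l < N \<Longrightarrow> (\<Sum>i\<le>N. (-1::real)^i * real (N choose i) * real i ^ l) = 0"
proof (induction N arbitrary: l)
  case 0 then show ?case by simp
next
  case (Suc N)
  define T where "T m = (\<Sum>i\<le>N. (-1::real)^i * real (N choose i) * real i ^ m)" for m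
  have split: "(\<Sum>i\<le>Suc N. (-1::real)^i * real (Suc N choose i) * real i ^ l)
     = T l - (\<Sum>m\<le>l. real (l choose m) * T m)"
  proof -
    have "(\<Sum>i\<le>Suc N. (-1::real)^i * real (Suc N choose i) * real i ^ l)
        = 0 ^ l + (\<Sum>i\<le>N. (-1::real)^Suc i * real (Suc N choose Suc i) * real (Suc i) ^ l)"
      by (subst sum.atMost_Suc_shift) simp
    also have "\<dots> = 0 ^ l + (\<Sum>i\<le>N. (-1::real)^Suc i * real (N choose Suc i) * real (Suc i) ^ l)
        - (\<Sum>i\<le>N. (-1::real)^i * real (N choose i) * real (Suc i) ^ l)"
      by (simp add: sum_subtractf[symmetric] sum.distrib[symmetric] algebra_simps)
    also have "0 ^ l + (\<Sum>i\<le>N. (-1::real)^Suc i * real (N choose Suc i) * real (Suc i) ^ l) = T l"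
    proof -
      have "T l = (\<Sum>i\<le>Suc N. (-1::real)^i * real (N choose i) * real i ^ l)"
        unfolding T_def by simp
      also have "\<dots> = 0 ^ l + (\<Sum>i\<le>N. (-1::real)^Suc i * real (N choose Suc i) * real (Suc i) ^ l)"
        by (subst sum.atMost_Suc_shift) simp
      finally show ?thesis by simp
    qed
    also have "(\<Sum>i\<le>N. (-1::real)^i * real (N choose i) * real (Suc i) ^ l)
       = (\<Sum>m\<le>l. real (l choose m) * T m)"
    proof -
      have "(\<Sum>i\<le>N. (-1::real)^i * real (N choose i) * real (Suc i) ^ l)
          = (\<Sum>i\<le>N. \<Sum>m\<le>l. (-1::real)^i * real (N choose i) * (real (l choose m) * real i ^ m))"
      proof (rule sum.cong)
        fix i assume "i \<in> {..N}"
        have b: "(1 + real i)^l = (\<Sum>m\<le>l. real (l choose m) * real i ^ m)"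
          using binomial_ring[of "real i" 1 l] by (simp add: add.commute)
        show "(-1::real)^i * real (N choose i) * real (Suc i) ^ l
          = (\<Sum>m\<le>l. (-1::real)^i * real (N choose i) * (real (l choose m) * real i ^ m))"
          by (simp add: b sum_distrib_left)
      qed simp
      also have "\<dots> = (\<Sum>m\<le>l. real (l choose m) * T m)"
        unfolding T_def by (subst sum.swap) (simp add: sum_distrib_left algebra_simps)
      finally show ?thesis .
    qed
    finally show ?thesis .
  qed
  have Tz: "m < N \<Longrightarrow> T m = 0" for m using Suc.IH unfolding T_def by simp
  show ?case
  proof (cases "l < N")
    case True
    then show ?thesis unfolding split using Tz by simp
  next
    case False
    then have l: "l = N" using Suc.prems by simp
    have "(\<Sum>m\<le>l. real (l choose m) * T m) = T l"
    proof (cases l)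
      case 0 then show ?thesis by simp
    next
      case (Suc k)
      have "(\<Sum>m\<le>k. real (l choose m) * T m) = 0"
        using Tz l Suc by (intro sum.neutral) auto
      then show ?thesis using Suc by (simp add: sum.atMost_Suc)
    qed
    then show ?thesis unfolding split by simp
  qed
qed

lemma polar_scalar:
  fixes a b :: real
  shows "(a - b)^n = (\<Sum>k\<le>n. (-1)^k * real (Suc n choose Suc k) * (a + real k * b)^n)"
proof -
  have z: "(\<Sum>i\<le>Suc n. (-1::real)^i * real (Suc n choose i) * ((a - b) + real i * b)^n) = 0"
  proof -
    have "(\<Sum>i\<le>Suc n. (-1::real)^i * real (Suc n choose i) * ((a - b) + real i * b)^n)
      = (\<Sum>i\<le>Suc n. \<Sum>m\<le>n. (real (n choose m) * b^m * (a-b)^(n-m)) * ((-1::real)^i * real (Suc n choose i) * real i ^ m))"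
    proof (rule sum.cong)
      fix i assume "i \<in> {..Suc n}"
      have e: "((a - b) + real i * b)^n = (\<Sum>m\<le>n. real (n choose m) * (real i * b)^m * (a-b)^(n-m))"
        using binomial_ring[of "real i * b" "a-b" n] by (simp add: add.commute)
      show "(-1::real)^i * real (Suc n choose i) * ((a - b) + real i * b)^n
        = (\<Sum>m\<le>n. (real (n choose m) * b^m * (a-b)^(n-m)) * ((-1::real)^i * real (Suc n choose i) * real i ^ m))"
        unfolding e sum_distrib_left by (rule sum.cong) (simp_all add: power_mult_distrib algebra_simps)
    qed simp
    also have "\<dots> = (\<Sum>m\<le>n. (real (n choose m) * b^m * (a-b)^(n-m)) * (\<Sum>i\<le>Suc n. (-1::real)^i * real (Suc n choose i) * real i ^ m))"
      by (subst sum.swap) (simp only: sum_distrib_left)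
    also have "\<dots> = 0"
    proof (intro sum.neutral ballI)
      fix m assume "m \<in> {..n}"
      then have "m < Suc n" by simp
      from alt_pow_sum[OF this] show "real (n choose m) * b^m * (a-b)^(n-m) * (\<Sum>i\<le>Suc n. (-1::real)^i * real (Suc n choose i) * real i ^ m) = 0"
        by (simp del: sum.atMost_Suc)
    qed
    finally show ?thesis .
  qed
  have "(\<Sum>i\<le>Suc n. (-1::real)^i * real (Suc n choose i) * ((a - b) + real i * b)^n)
     = (a-b)^n - (\<Sum>k\<le>n. (-1)^k * real (Suc n choose Suc k) * (a + real k * b)^n)"
  proof -
    have "(\<Sum>i\<le>n. (-1::real)^Suc i * real (Suc n choose Suc i) * ((a-b) + real (Suc i) * b)^n)
       = - (\<Sum>k\<le>n. (-1)^k * real (Suc n choose Suc k) * (a + real k * b)^n)"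
      unfolding sum_negf[symmetric] by (rule sum.cong) (simp_all add: algebra_simps del: binomial_Suc_Suc)
    then show ?thesis by (subst sum.atMost_Suc_shift) (simp del: binomial_Suc_Suc)
  qed
  with z show ?thesis by simp
qed



definition cost :: "nat \<Rightarrow> ('a \<Rightarrow> real) \<Rightarrow> (real \<times> 'a) list \<Rightarrow> real" where
  "cost n N xs = (\<Sum>(a,x)\<leftarrow>xs. \<bar>a\<bar> * N x ^ n)"

definition reps :: "nat \<Rightarrow> 'a::real_vector set \<Rightarrow> (('a \<Rightarrow> real) \<Rightarrow> real) \<Rightarrow> (real \<times> 'a) list set" where
  "reps n S u = {xs. snd ` set xs \<subseteq> S \<and> u = symrep n xs}"

lemma pns_eq: "proj_sym_norm n S N u = Inf (cost n N ` reps n S u)"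
  unfolding proj_sym_norm_def cost_def reps_def by (simp add: setcompr_eq_image)

lemma cost_Nil[simp]: "cost n N [] = 0" by (simp add: cost_def)
lemma cost_Cons[simp]: "cost n N ((a,x)#xs) = \<bar>a\<bar> * N x ^ n + cost n N xs" by (simp add: cost_def)
lemma cost_append: "cost n N (xs @ ys) = cost n N xs + cost n N ys" by (simp add: cost_def)

lemma symrep_Nil: "symrep n [] = (\<lambda>f. 0)" by (rule ext) (simp add: symrep_def)
lemma symrep_Cons: "symrep n ((a,x)#xs) = (\<lambda>f. a * symrep n [(1,x)] f + symrep n xs f)"
  by (simp add: symrep_def fun_eq_iff)
lemma symrep_append: "symrep n (xs @ ys) = (\<lambda>f. symrep n xs f + symrep n ys f)"
  by (simp add: symrep_def fun_eq_iff)

definition scl :: "real \<Rightarrow> (real \<times> 'a) list \<Rightarrow> (real \<times> 'a) list" where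
  "scl c xs = map (\<lambda>(a,x). (c*a, x)) xs"

lemma sum_scl: "(\<Sum>(a,x)\<leftarrow>map (\<lambda>(a,x). (c*a,x)) xs. a * g x) = (c::real) * (\<Sum>(a,x)\<leftarrow>xs. a * (g x :: real))"
  by (induction xs) (auto simp: algebra_simps)
lemma symrep_scl: "symrep n (scl c xs) = (\<lambda>f. c * symrep n xs f)"
  unfolding symrep_def scl_def fun_eq_iff sum_scl by auto
lemma cost_scl: "cost n N (scl c xs) = \<bar>c\<bar> * cost n N xs"
  unfolding cost_def scl_def
  by (induction xs) (auto simp: algebra_simps abs_mult)
lemma set_scl: "snd ` set (scl c xs) = snd ` set xs"
  unfolding scl_def by (induction xs) auto

lemma cost_nonneg: "\<forall>x\<in>S. 0 \<le> N x \<Longrightarrow> snd ` set xs \<subseteq> S \<Longrightarrow> 0 \<le> cost n N xs"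
  by (induction xs) auto

lemma pns_le:
  assumes "\<forall>x\<in>S. 0 \<le> N x" "xs \<in> reps n S u"
  shows "proj_sym_norm n S N u \<le> cost n N xs"
proof -
  have "bdd_below (cost n N ` reps n S u)"
    by (rule bdd_belowI[where m=0]) (use assms(1) in \<open>auto simp: reps_def intro: cost_nonneg\<close>)
  then show ?thesis unfolding pns_eq using assms(2) by (intro cInf_lower) auto
qed

lemma pns_ge:
  assumes "reps n S u \<noteq> {}" "\<And>xs. xs \<in> reps n S u \<Longrightarrow> B \<le> cost n N xs"
  shows "B \<le> proj_sym_norm n S N u"
  unfolding pns_eq using assms by (intro cInf_greatest) auto

lemma pns_ge_mult:
  assumes "\<forall>x\<in>S. 0 \<le> N x" "reps n S u \<noteq> {}" "0 \<le> C"
    "\<And>xs. xs \<in> reps n S u \<Longrightarrow> A \<le> C * cost n N xs"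
  shows "A \<le> C * proj_sym_norm n S N u"
proof (cases "C = 0")
  case True
  then obtain xs where "xs \<in> reps n S u" using assms(2) by auto
  then show ?thesis using assms(4) True by auto
next
  case False
  then have "A / C \<le> proj_sym_norm n S N u"
    using assms by (intro pns_ge) (auto simp: divide_le_eq mult.commute)
  then show ?thesis using False assms(3) by (simp add: divide_le_eq mult.commute)
qed

lemma pns_nonneg:
  assumes "\<forall>x\<in>S. 0 \<le> N x" "reps n S u \<noteq> {}"
  shows "0 \<le> proj_sym_norm n S N u"
  using assms by (intro pns_ge) (auto simp: reps_def intro: cost_nonneg)

lemma reps_add:
  "xs \<in> reps n S u \<Longrightarrow> ys \<in> reps n S v \<Longrightarrow> xs @ ys \<in> reps n S (\<lambda>f. u f + v f)"
  by (auto simp: reps_def symrep_append)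

lemma reps_scl:
  "xs \<in> reps n S u \<Longrightarrow> scl c xs \<in> reps n S (\<lambda>f. c * u f)"
  by (auto simp: reps_def symrep_scl set_scl)

lemma pns_add:
  assumes N: "\<forall>x\<in>S. 0 \<le> N x" and "reps n S u \<noteq> {}" "reps n S v \<noteq> {}"
  shows "proj_sym_norm n S N (\<lambda>f. u f + v f) \<le> proj_sym_norm n S N u + proj_sym_norm n S N v"
proof -
  have "proj_sym_norm n S N (\<lambda>f. u f + v f) - proj_sym_norm n S N u \<le> proj_sym_norm n S N v"
  proof (rule pns_ge[OF assms(3)])
    fix ys assume ys: "ys \<in> reps n S v"
    have "proj_sym_norm n S N (\<lambda>f. u f + v f) - cost n N ys \<le> proj_sym_norm n S N u"
    proof (rule pns_ge[OF assms(2)])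
      fix xs assume xs: "xs \<in> reps n S u"
      have "proj_sym_norm n S N (\<lambda>f. u f + v f) \<le> cost n N (xs @ ys)"
        by (rule pns_le[OF N reps_add[OF xs ys]])
      then show "proj_sym_norm n S N (\<lambda>f. u f + v f) - cost n N ys \<le> cost n N xs"
        by (simp add: cost_append)
    qed
    then show "proj_sym_norm n S N (\<lambda>f. u f + v f) - proj_sym_norm n S N u \<le> cost n N ys" by simp
  qed
  then show ?thesis by simp
qed

lemma pns_scale:
  assumes N: "\<forall>x\<in>S. 0 \<le> N x" and "reps n S u \<noteq> {}"
  shows "proj_sym_norm n S N (\<lambda>f. c * u f) \<le> \<bar>c\<bar> * proj_sym_norm n S N u"
  using N assms(2) abs_ge_zero
proof (rule pns_ge_mult)
  fix xs assume "xs \<in> reps n S u"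
  from pns_le[OF N reps_scl[OF this]] show "proj_sym_norm n S N (\<lambda>f. c * u f) \<le> \<bar>c\<bar> * cost n N xs"
    by (simp add: cost_scl)
qed

lemma pns_list:
  assumes N: "\<forall>x\<in>S. 0 \<le> N x"
    and h: "\<And>a x. (a,x) \<in> set xs \<Longrightarrow> reps n S (symrep n [(1,x)]) \<noteq> {} \<and> proj_sym_norm n S N (symrep n [(1,x)]) \<le> B x"
  shows "reps n S (symrep n xs) \<noteq> {} \<and> proj_sym_norm n S N (symrep n xs) \<le> (\<Sum>(a,x)\<leftarrow>xs. \<bar>a\<bar> * B x)"
  using h
proof (induction xs)
  case Nil
  have "[] \<in> reps n S (symrep n [])" by (auto simp: reps_def)
  then show ?case using pns_le[OF N, of "[]"] by auto
next
  case (Cons p xs)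
  obtain a x where p: "p = (a,x)" by force
  have IH: "reps n S (symrep n xs) \<noteq> {}" "proj_sym_norm n S N (symrep n xs) \<le> (\<Sum>(a,x)\<leftarrow>xs. \<bar>a\<bar> * B x)"
    using Cons by auto
  have hx: "reps n S (symrep n [(1,x)]) \<noteq> {}" "proj_sym_norm n S N (symrep n [(1,x)]) \<le> B x"
    using Cons.prems[of a x] p by auto
  obtain r1 where r1: "r1 \<in> reps n S (symrep n [(1,x)])" using hx by auto
  obtain r2 where r2: "r2 \<in> reps n S (symrep n xs)" using IH by auto
  have ne1: "reps n S (\<lambda>f. a * symrep n [(1,x)] f) \<noteq> {}" using reps_scl[OF r1] by auto
  have "reps n S (symrep n (p#xs)) \<noteq> {}"
    unfolding p symrep_Cons[of n a x xs] using reps_add[OF reps_scl[OF r1] r2] by auto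
  moreover have "proj_sym_norm n S N (symrep n (p#xs))
      \<le> proj_sym_norm n S N (\<lambda>f. a * symrep n [(1,x)] f) + proj_sym_norm n S N (symrep n xs)"
    unfolding p symrep_Cons[of n a x xs] by (rule pns_add[OF N ne1 IH(1)])
  moreover have "proj_sym_norm n S N (\<lambda>f. a * symrep n [(1,x)] f) \<le> \<bar>a\<bar> * B x"
    using pns_scale[OF N hx(1), of a] hx(2) by (meson abs_ge_zero mult_left_mono order_trans)
  ultimately show ?case using IH(2) p by auto
qed

definition push :: "('a::real_vector \<Rightarrow> 'b::real_vector) \<Rightarrow> (('a \<Rightarrow> real) \<Rightarrow> real) \<Rightarrow> ('b \<Rightarrow> real) \<Rightarrow> real" where
  "push T u = (\<lambda>f. if linear f then u (f \<circ> T) else 0)"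

definition mapl :: "('a \<Rightarrow> 'b) \<Rightarrow> (real \<times> 'a) list \<Rightarrow> (real \<times> 'b) list" where
  "mapl T xs = map (\<lambda>(a,x). (a, T x)) xs"

lemma symrep_mapl:
  assumes "linear T"
  shows "symrep n (mapl T xs) = push T (symrep n xs)"
proof -
  have "(\<Sum>(a,x)\<leftarrow>map (\<lambda>(a,x). (a, T x)) xs. a * f x ^ n) = (\<Sum>(a,x)\<leftarrow>xs. a * (f \<circ> T) x ^ n)" for f :: "'b \<Rightarrow> real"
    by (induction xs) auto
  then show ?thesis
    unfolding symrep_def push_def mapl_def fun_eq_iff using linear_compose[OF assms]
    by auto
qed

lemma cost_mapl:
  assumes "snd ` set xs \<subseteq> S" "\<And>x. x \<in> S \<Longrightarrow> T x \<in> S' \<and> N' (T x) \<le> N x" "\<forall>x\<in>S'. 0 \<le> N' x"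
  shows "cost n N' (mapl T xs) \<le> cost n N xs"
  using assms(1)
proof (induction xs)
  case (Cons p xs)
  obtain a x where p: "p = (a,x)" by force
  have "N' (T x) ^ n \<le> N x ^ n" using Cons.prems p assms by (intro power_mono) auto
  then have "\<bar>a\<bar> * N' (T x) ^ n \<le> \<bar>a\<bar> * N x ^ n" by (simp add: mult_left_mono)
  then show ?case using Cons p by (auto simp: mapl_def)
qed (simp add: mapl_def)

lemma pns_push:
  assumes T: "linear T" and N': "\<forall>x\<in>S'. 0 \<le> N' x" and N: "\<forall>x\<in>S. 0 \<le> N x"
    and TS: "\<And>x. x \<in> S \<Longrightarrow> T x \<in> S' \<and> N' (T x) \<le> N x"
    and ne: "reps n S u \<noteq> {}"
  shows "proj_sym_norm n S' N' (push T u) \<le> proj_sym_norm n S N u"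
proof (rule pns_ge[OF ne])
  fix xs assume xs: "xs \<in> reps n S u"
  have m: "mapl T xs \<in> reps n S' (push T u)"
    using xs TS symrep_mapl[OF T, of n xs] by (auto simp: reps_def mapl_def)
  have "cost n N' (mapl T xs) \<le> cost n N xs"
  proof (rule cost_mapl)
    show "snd ` set xs \<subseteq> S" using xs by (auto simp: reps_def)
  qed (use TS N' in auto)
  with pns_le[OF N' m] show "proj_sym_norm n S' N' (push T u) \<le> cost n N xs" by simp
qed

lemma pns_lower:
  assumes "linear f" "\<And>x. x \<in> S \<Longrightarrow> \<bar>f x\<bar> \<le> N x" "reps n S u \<noteq> {}"
  shows "\<bar>u f\<bar> \<le> proj_sym_norm n S N u"
proof (rule pns_ge[OF assms(3)])
  fix xs assume "xs \<in> reps n S u"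
  then have u: "u = symrep n xs" and xs: "snd ` set xs \<subseteq> S" by (auto simp: reps_def)
  have "\<bar>\<Sum>(a,x)\<leftarrow>xs. a * f x ^ n\<bar> \<le> cost n N xs" using xs
  proof (induction xs)
    case (Cons p xs)
    obtain a x where p: "p = (a,x)" by force
    have fx: "\<bar>f x\<bar> \<le> N x" using Cons.prems p assms(2) by auto
    have "\<bar>a * f x ^ n\<bar> \<le> \<bar>a\<bar> * N x ^ n"
      using fx by (simp add: abs_mult power_abs mult_left_mono power_mono)
    then show ?case using Cons p by (auto intro: order_trans[OF abs_triangle_ineq])
  qed simp
  then show "\<bar>u f\<bar> \<le> cost n N xs" using u assms(1) by (simp add: symrep_def)
qed



lemma polar_vec:
  fixes y z :: "'a::real_vector"
  assumes yz: "y \<in> P" "z \<in> P" and add: "\<forall>x\<in>P. \<forall>y\<in>P. x + y \<in> P"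
    and scl: "\<forall>x\<in>P. \<forall>c::real. 0 \<le> c \<longrightarrow> c *\<^sub>R x \<in> P"
  shows "reps n P (symrep n [(1, y - z)]) \<noteq> {}"
proof -
  define ws where "ws = map (\<lambda>k. ((-1)^k * real (Suc n choose Suc k), y + real k *\<^sub>R z)) [0..<Suc n]"
  have "snd ` set ws \<subseteq> P" using yz add scl by (auto simp: ws_def)
  moreover have "symrep n [(1, y - z)] = symrep n ws"
  proof (rule ext)
    fix f :: "'a \<Rightarrow> real"
    show "symrep n [(1, y - z)] f = symrep n ws f"
    proof (cases "linear f")
      case True
      have "(\<Sum>(a,x)\<leftarrow>ws. a * f x ^ n) = (\<Sum>k\<in>set [0..<Suc n]. (-1)^k * real (Suc n choose Suc k) * f (y + real k *\<^sub>R z) ^ n)"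
        unfolding ws_def sum_set_upt_conv_sum_list_nat by (simp add: o_def)
      also have "\<dots> = (\<Sum>k\<le>n. (-1)^k * real (Suc n choose Suc k) * (f y + real k * f z) ^ n)"
        using True by (intro sum.cong) (auto simp: linear_add linear_scale atLeast0LessThan lessThan_Suc_atMost)
      also have "\<dots> = (f y - f z) ^ n" by (rule polar_scalar[symmetric])
      also have "\<dots> = f (y - z) ^ n" using True by (simp add: linear_diff)
      finally show ?thesis using True by (simp add: symrep_def)
    qed (simp add: symrep_def)
  qed
  ultimately have "ws \<in> reps n P (symrep n [(1, y - z)])" by (auto simp: reps_def)
  then show ?thesis by auto
qed



locale ons =
  fixes V :: "'a::real_vector set" and N P
  assumes ons: "ordered_normed_space V N P"
begin

lemma sub: "subspace V" using ons unfolding ordered_normed_space_def by (elim conjE) assumption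
lemma nrm: "is_norm_on V N" using ons unfolding ordered_normed_space_def by (elim conjE) assumption
lemma PV: "P \<subseteq> V" using ons unfolding ordered_normed_space_def by (elim conjE) assumption
lemma addP: "\<forall>x\<in>P. \<forall>y\<in>P. x + y \<in> P" using ons unfolding ordered_normed_space_def by (elim conjE) assumption
lemma sclP: "\<forall>x\<in>P. \<forall>c::real. 0 \<le> c \<longrightarrow> c *\<^sub>R x \<in> P" using ons unfolding ordered_normed_space_def by (elim conjE) assumption
lemma VPP: "V = {y - z | y z. y \<in> P \<and> z \<in> P}" using ons unfolding ordered_normed_space_def by (elim conjE) assumption
lemma bdd: "bdd_above {norm_plus V N P x | x. x \<in> V \<and> N x \<le> 1}" using ons unfolding ordered_normed_space_def by (elim conjE) assumption

lemma Nnn: "\<forall>x\<in>V. 0 \<le> N x" using nrm by (simp add: is_norm_on_def)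
lemma N0: "x \<in> V \<Longrightarrow> N x = 0 \<longleftrightarrow> x = 0" using nrm by (simp add: is_norm_on_def)
lemma Nscale: "x \<in> V \<Longrightarrow> N (c *\<^sub>R x) = \<bar>c\<bar> * N x" using nrm by (simp add: is_norm_on_def)
lemma Ntri: "x \<in> V \<Longrightarrow> y \<in> V \<Longrightarrow> N (x + y) \<le> N x + N y" using nrm by (simp add: is_norm_on_def)

lemma zV: "0 \<in> V" using sub by (simp add: subspace_0)
lemma decomp: "x \<in> V \<Longrightarrow> \<exists>y z. y \<in> P \<and> z \<in> P \<and> x = y - z"
  using VPP by blast
lemma zP: "0 \<in> P"
proof -
  obtain y z where "y \<in> P" "z \<in> P" "0 = y - z" using decomp[OF zV] by auto
  then have "0 *\<^sub>R y \<in> P" using sclP by blast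
  then show ?thesis by simp
qed

lemma Ndiff: "x \<in> V \<Longrightarrow> y \<in> V \<Longrightarrow> N (x - y) \<le> N x + N y"
proof -
  assume xy: "x \<in> V" "y \<in> V"
  have "-y \<in> V" using xy sub by (simp add: subspace_neg)
  then have "N (x + -y) \<le> N x + N (-y)" using Ntri[OF xy(1)] by blast
  moreover have "N (-y) = N y" using Nscale[OF xy(2), of "-1"] by simp
  ultimately show ?thesis by simp
qed

definition np where "np x = norm_plus V N P x"

lemma npset_ne: assumes "x \<in> V" shows "{N y + N z | y z. y \<in> P \<and> z \<in> P \<and> x = y - z} \<noteq> {}"
proof -
  obtain y z where "y \<in> P" "z \<in> P" "x = y - z" using decomp[OF assms] by blast
  then show ?thesis by blast
qed
lemma npset_bdd: "bdd_below {N y + N z | y z. y \<in> P \<and> z \<in> P \<and> x = y - z}"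
proof (rule bdd_belowI[where m=0])
  fix s assume "s \<in> {N y + N z | y z. y \<in> P \<and> z \<in> P \<and> x = y - z}"
  then obtain y z where "y \<in> P" "z \<in> P" "s = N y + N z" by blast
  then show "0 \<le> s" using Nnn PV by (simp add: add_nonneg_nonneg subset_iff)
qed

lemma np_ge: assumes x: "x \<in> V" shows "N x \<le> np x"
  unfolding np_def norm_plus_def
proof (rule cInf_greatest[OF npset_ne[OF x]])
  fix s assume "s \<in> {N y + N z | y z. y \<in> P \<and> z \<in> P \<and> x = y - z}"
  then obtain y z where "y \<in> P" "z \<in> P" "x = y - z" "s = N y + N z" by blast
  then show "N x \<le> s" using Ndiff PV by (simp add: subset_iff)
qed
lemma np_nonneg: "x \<in> V \<Longrightarrow> 0 \<le> np x"
  using np_ge Nnn by (meson order_trans)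
lemma np_le: "y \<in> P \<Longrightarrow> z \<in> P \<Longrightarrow> np (y - z) \<le> N y + N z"
  unfolding np_def norm_plus_def by (rule cInf_lower[OF _ npset_bdd]) auto
lemma np_lt: "x \<in> V \<Longrightarrow> 0 < d \<Longrightarrow> \<exists>y z. y \<in> P \<and> z \<in> P \<and> x = y - z \<and> N y + N z < np x + d"
proof -
  assume x: "x \<in> V" and d: "0 < d"
  have "Inf {N y + N z | y z. y \<in> P \<and> z \<in> P \<and> x = y - z} < np x + d"
    using d by (simp add: np_def norm_plus_def)
  from cInf_lessD[OF npset_ne[OF x] this] show ?thesis by auto
qed

definition cp where "cp = c_plus V N P"

lemma np_le_cp1: "x \<in> V \<Longrightarrow> N x \<le> 1 \<Longrightarrow> np x \<le> cp"
  unfolding cp_def c_plus_def np_def by (rule cSup_upper[OF _ bdd]) auto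

lemma np0: "np 0 = 0"
proof -
  have "np 0 \<le> N 0 + N 0" using np_le[OF zP zP] by simp
  moreover have "N 0 = 0" using N0 zV by simp
  ultimately show ?thesis using np_nonneg[OF zV] by simp
qed

lemma Nz: "N 0 = 0" using N0[OF zV] by simp
lemma cp_nonneg: "0 \<le> cp"
  using np_le_cp1[OF zV] np0 Nz by simp

lemma np_scale_le:
  assumes x: "x \<in> V" and t: "0 < t"
  shows "np (t *\<^sub>R x) \<le> t * np x"
proof -
  have "np (t *\<^sub>R x) / t \<le> np x"
    unfolding np_def[of x] norm_plus_def
  proof (rule cInf_greatest[OF npset_ne[OF x]])
    fix s assume "s \<in> {N y + N z | y z. y \<in> P \<and> z \<in> P \<and> x = y - z}"
    then obtain y z where yz: "y \<in> P" "z \<in> P" "x = y - z" "s = N y + N z" by auto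
    have "t *\<^sub>R x = t *\<^sub>R y - t *\<^sub>R z" using yz by (simp add: scaleR_diff_right)
    then have "np (t *\<^sub>R x) \<le> N (t *\<^sub>R y) + N (t *\<^sub>R z)"
      using np_le sclP yz t by (metis less_imp_le)
    also have "\<dots> = t * s"
    proof -
      have a: "N (t *\<^sub>R y) = t * N y" using Nscale[of y t] yz(1) PV t by auto
      have b: "N (t *\<^sub>R z) = t * N z" using Nscale[of z t] yz(2) PV t by auto
      show ?thesis unfolding a b yz(4) by (simp add: algebra_simps)
    qed
    finally show "np (t *\<^sub>R x) / t \<le> s" using t by (simp add: divide_le_eq mult.commute)
  qed
  then show ?thesis using t by (simp add: divide_le_eq mult.commute)
qed

lemma np_le_cp: "x \<in> V \<Longrightarrow> np x \<le> cp * N x"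
proof -
  assume x: "x \<in> V"
  show ?thesis
  proof (cases "x = 0")
    case True then show ?thesis using np0 Nz by simp
  next
    case False
    then have t: "0 < N x" using N0 Nnn x by force
    define y where "y = (1 / N x) *\<^sub>R x"
    have yV: "y \<in> V" using x sub by (simp add: y_def subspace_scale)
    have "N y = 1" using t Nscale[OF x] by (simp add: y_def)
    then have "np y \<le> cp" using np_le_cp1 yV by simp
    moreover have "x = N x *\<^sub>R y" using t by (simp add: y_def)
    then have "np x \<le> N x * np y" using np_scale_le[OF yV t] by metis
    ultimately show ?thesis using t by (metis mult.commute mult_left_mono order_trans less_imp_le)
  qed
qed

lemma repsP_single: "x \<in> V \<Longrightarrow> reps n P (symrep n [(1, x)]) \<noteq> {}"
proof -
  assume "x \<in> V"
  then obtain y z where "y \<in> P" "z \<in> P" "x = y - z" using decomp by blast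
  then show ?thesis using polar_vec[OF _ _ addP sclP] by simp
qed

lemma repsP_ne: "u \<in> sym_tensors n V \<Longrightarrow> reps n P u \<noteq> {}"
proof -
  assume "u \<in> sym_tensors n V"
  then obtain xs where u: "u = symrep n xs" and xs: "snd ` set xs \<subseteq> V" by (auto simp: sym_tensors_def)
  have "reps n P (symrep n xs) \<noteq> {} \<and> proj_sym_norm n P N (symrep n xs) \<le> (\<Sum>(a,x)\<leftarrow>xs. \<bar>a\<bar> * proj_sym_norm n P N (symrep n [(1,x)]))"
  proof (rule pns_list)
    show "\<forall>x\<in>P. 0 \<le> N x" using Nnn PV by blast
    fix a x assume "(a, x) \<in> set xs"
    then have "x \<in> V" using xs by force
    then show "reps n P (symrep n [(1, x)]) \<noteq> {} \<and> proj_sym_norm n P N (symrep n [(1, x)]) \<le> proj_sym_norm n P N (symrep n [(1, x)])"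
      using repsP_single by simp
  qed
  then show ?thesis using u by simp
qed

lemma repsV_ne: "u \<in> sym_tensors n V \<Longrightarrow> reps n V u \<noteq> {}"
  by (auto simp: sym_tensors_def reps_def)

end



lemma N2_eq: "l1m_N 2 v = \<bar>v 0\<bar> + \<bar>v 1\<bar>"
  by (simp add: l1m_N_def numeral_2_eq_2)

lemma N2_nonneg: "0 \<le> l1m_N 2 v" by (simp add: N2_eq)

lemma P2_add: "\<forall>x\<in>l1m_P 2. \<forall>y\<in>l1m_P 2. x + y \<in> l1m_P 2"
  by (auto simp: l1m_P_def l1m_V_def)
lemma P2_scl: "\<forall>x\<in>l1m_P 2. \<forall>c::real. 0 \<le> c \<longrightarrow> c *\<^sub>R x \<in> l1m_P 2"
  by (auto simp: l1m_P_def l1m_V_def scaleR_fun_def)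

lemma linear_eval: "linear (\<lambda>v::nat \<Rightarrow> real. v i)"
  by (rule linearI) (simp_all add: scaleR_fun_def)

lemma tendsto_costsum:
  "((\<lambda>d. \<Sum>(a,x)\<leftarrow>xs. \<bar>a\<bar> * (h x + d) ^ n) \<longlongrightarrow> (\<Sum>(a,x)\<leftarrow>xs. \<bar>a\<bar> * h x ^ n)) (at_right (0::real))"
proof (induction xs)
  case Nil then show ?case by simp
next
  case (Cons p xs)
  obtain a x where p: "p = (a,x)" by force
  have "((\<lambda>d. \<bar>a\<bar> * (h x + d) ^ n) \<longlongrightarrow> \<bar>a\<bar> * (h x + 0) ^ n) (at_right (0::real))"
    by (intro tendsto_intros)
  then show ?case using Cons p by (auto intro: tendsto_add)
qed

lemma sum_mult_C: "(\<Sum>(a,x)\<leftarrow>xs. \<bar>a\<bar> * (C * g x)) = (C::real) * (\<Sum>(a,x)\<leftarrow>xs. \<bar>a\<bar> * g x)"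
  by (induction xs) (auto simp: algebra_simps)

context ons
begin

lemma single_bound:
  assumes n: "1 \<le> n" and C: "0 \<le> C"
    and H: "\<forall>v\<in>sym_tensors n (l1m_V 2) - {\<lambda>_. 0}.
        proj_sym_norm n (l1m_P 2) (l1m_N 2) v / proj_sym_norm n (l1m_V 2) (l1m_N 2) v \<le> C"
    and x: "x \<in> V" and d: "0 < d"
  shows "proj_sym_norm n P N (symrep n [(1,x)]) \<le> C * (np x + d) ^ n"
proof (cases "x = 0")
  case True
  have "symrep n [(1,x)] = symrep n []"
    using True n by (auto simp: symrep_def fun_eq_iff linear_0)
  then have "[] \<in> reps n P (symrep n [(1,x)])" by (simp add: reps_def)
  then have "proj_sym_norm n P N (symrep n [(1,x)]) \<le> 0"
    using pns_le[of P N] Nnn PV by fastforce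
  moreover have "0 \<le> C * (np x + d) ^ n" using C np_nonneg[OF x] d by simp
  ultimately show ?thesis by linarith
next
  case False
  obtain y z where yz: "y \<in> P" "z \<in> P" "x = y - z" and lt: "N y + N z < np x + d"
    using np_lt[OF x d] by blast
  have yV: "y \<in> V" and zV': "z \<in> V" using yz PV by auto
  define \<alpha> where "\<alpha> = N y"
  define \<beta> where "\<beta> = N z"
  have a0: "0 \<le> \<alpha>" "0 \<le> \<beta>" using Nnn yV zV' by (auto simp: \<alpha>_def \<beta>_def)
  define yh where "yh = (1 / \<alpha>) *\<^sub>R y"
  define zh where "zh = (1 / \<beta>) *\<^sub>R z"
  have yhP: "yh \<in> P" "zh \<in> P" using sclP yz a0 by (auto simp: yh_def zh_def)
  have yh1: "N yh \<le> 1"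
    using Nscale[OF yV, of "1/\<alpha>"] a0 by (cases "\<alpha> = 0") (auto simp: yh_def \<alpha>_def)
  have zh1: "N zh \<le> 1"
    using Nscale[OF zV', of "1/\<beta>"] a0 by (cases "\<beta> = 0") (auto simp: zh_def \<beta>_def)
  have ay: "\<alpha> *\<^sub>R yh = y"
    using N0[OF yV] by (cases "\<alpha> = 0") (auto simp: yh_def \<alpha>_def)
  have bz: "\<beta> *\<^sub>R zh = z"
    using N0[OF zV'] by (cases "\<beta> = 0") (auto simp: zh_def \<beta>_def)
  define T where "T v = v 0 *\<^sub>R yh + v 1 *\<^sub>R zh" for v :: "nat \<Rightarrow> real"
  have linT: "linear T"
    by (rule linearI) (simp_all add: T_def scaleR_fun_def scaleR_add_left scaleR_add_right)
  define w :: "nat \<Rightarrow> real" where "w = (\<lambda>i. if i = 0 then \<alpha> else if i = 1 then - \<beta> else 0)"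
  have wV: "w \<in> l1m_V 2" by (simp add: w_def l1m_V_def)
  have Tw: "T w = x" using ay bz yz by (simp add: T_def w_def)
  define uw where "uw = symrep n [(1,w)]"
  have push_eq: "push T uw = symrep n [(1,x)]"
    using symrep_mapl[OF linT, of n "[(1,w)]"] Tw by (simp add: uw_def mapl_def)
  have N2w: "l1m_N 2 w = \<alpha> + \<beta>" using a0 by (simp add: N2_eq w_def)
  have repsP2: "reps n (l1m_P 2) uw \<noteq> {}"
  proof -
    define wp :: "nat \<Rightarrow> real" where "wp = (\<lambda>i. if i = 0 then \<alpha> else 0)"
    define wm :: "nat \<Rightarrow> real" where "wm = (\<lambda>i. if i = 1 then \<beta> else 0)"
    have "wp \<in> l1m_P 2" "wm \<in> l1m_P 2" using a0 by (auto simp: wp_def wm_def l1m_P_def l1m_V_def)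
    moreover have "w = wp - wm" by (auto simp: w_def wp_def wm_def fun_eq_iff)
    ultimately show ?thesis using polar_vec[OF _ _ P2_add P2_scl, of wp wm n] by (simp add: uw_def)
  qed
  have step1: "proj_sym_norm n P N (symrep n [(1,x)]) \<le> proj_sym_norm n (l1m_P 2) (l1m_N 2) uw"
    unfolding push_eq[symmetric]
  proof (rule pns_push[OF linT _ _ _ repsP2])
    show "\<forall>x\<in>P. 0 \<le> N x" using Nnn PV by blast
    show "\<forall>x\<in>l1m_P 2. 0 \<le> l1m_N 2 x" by (simp add: N2_nonneg)
    fix v assume v: "v \<in> l1m_P 2"
    then have v0: "0 \<le> v 0" "0 \<le> v 1" by (auto simp: l1m_P_def)
    have p1: "v 0 *\<^sub>R yh \<in> P" "v 1 *\<^sub>R zh \<in> P" using sclP yhP v0 by auto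
    then show "T v \<in> P \<and> N (T v) \<le> l1m_N 2 v"
    proof -
      have "T v \<in> P" using addP p1 by (simp add: T_def)
      moreover have "N (T v) \<le> N (v 0 *\<^sub>R yh) + N (v 1 *\<^sub>R zh)"
        unfolding T_def using Ntri p1 PV by blast
      moreover have "N (v 0 *\<^sub>R yh) \<le> v 0" using Nscale[of yh "v 0"] yhP PV v0 yh1
        by (auto simp: mult_left_le)
      moreover have "N (v 1 *\<^sub>R zh) \<le> v 1" using Nscale[of zh "v 1"] yhP PV v0 zh1
        by (auto simp: mult_left_le)
      moreover have "l1m_N 2 v = v 0 + v 1" using v0 by (simp add: N2_eq)
      ultimately show ?thesis by linarith
    qed
  qed
  have repsV2: "[(1,w)] \<in> reps n (l1m_V 2) uw" using wV by (simp add: reps_def uw_def)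
  have N2nn: "\<forall>x\<in>l1m_V 2. 0 \<le> l1m_N 2 x" by (simp add: N2_nonneg)
  have lower: "\<bar>uw (\<lambda>v. v i)\<bar> \<le> proj_sym_norm n (l1m_V 2) (l1m_N 2) uw" for i :: nat
  proof (rule pns_lower[OF linear_eval])
    show "reps n (l1m_V 2) uw \<noteq> {}" using repsV2 by blast
    fix v :: "nat \<Rightarrow> real" assume "v \<in> l1m_V 2"
    then show "\<bar>v i\<bar> \<le> l1m_N 2 v"
      by (cases "i = 0"; cases "i = 1") (auto simp: N2_eq l1m_V_def)
  qed
  have ab: "\<alpha> \<noteq> 0 \<or> \<beta> \<noteq> 0"
  proof (rule ccontr)
    assume "\<not> (\<alpha> \<noteq> 0 \<or> \<beta> \<noteq> 0)"
    then have "y = 0" "z = 0" using N0 yV zV' by (auto simp: \<alpha>_def \<beta>_def)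
    then show False using False yz by simp
  qed
  have uw_i: "uw (\<lambda>v. v 0) = \<alpha> ^ n" "uw (\<lambda>v. v 1) = (- \<beta>) ^ n"
    using linear_eval by (auto simp: uw_def symrep_def w_def)
  have pos: "0 < proj_sym_norm n (l1m_V 2) (l1m_N 2) uw"
  proof (cases "\<alpha> = 0")
    case True
    then have "0 < \<bar>uw (\<lambda>v. v 1)\<bar>" using ab uw_i by simp
    then show ?thesis using lower[of 1] by linarith
  next
    case False
    then have "0 < \<bar>uw (\<lambda>v. v 0)\<bar>" using uw_i by simp
    then show ?thesis using lower[of 0] by linarith
  qed
  have uw_ne: "uw \<noteq> (\<lambda>_. 0)"
  proof
    assume "uw = (\<lambda>_. 0)"
    then have "uw (\<lambda>v. v 0) = 0" "uw (\<lambda>v. v 1) = 0" by auto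
    then show False using ab uw_i by auto
  qed
  have uwS: "uw \<in> sym_tensors n (l1m_V 2)" using wV by (auto simp: sym_tensors_def uw_def)
  have "proj_sym_norm n (l1m_P 2) (l1m_N 2) uw / proj_sym_norm n (l1m_V 2) (l1m_N 2) uw \<le> C"
    using H uw_ne uwS by blast
  then have step2: "proj_sym_norm n (l1m_P 2) (l1m_N 2) uw \<le> C * proj_sym_norm n (l1m_V 2) (l1m_N 2) uw"
    using pos by (simp add: divide_le_eq mult.commute)
  have step3: "proj_sym_norm n (l1m_V 2) (l1m_N 2) uw \<le> (\<alpha> + \<beta>) ^ n"
    using pns_le[OF N2nn repsV2] N2w by simp
  have "(\<alpha> + \<beta>) ^ n \<le> (np x + d) ^ n"
    using lt a0 by (intro power_mono) (auto simp: \<alpha>_def \<beta>_def)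
  then have "C * proj_sym_norm n (l1m_V 2) (l1m_N 2) uw \<le> C * (np x + d) ^ n"
    using step3 C by (meson mult_left_mono order_trans)
  then show ?thesis using step1 step2 by linarith
qed

lemma np_fun: "norm_plus V N P = np" by (rule ext) (simp add: np_def)

lemma main_bound:
  assumes n: "1 \<le> n" and C: "0 \<le> C"
    and H: "\<forall>v\<in>sym_tensors n (l1m_V 2) - {\<lambda>_. 0}.
        proj_sym_norm n (l1m_P 2) (l1m_N 2) v / proj_sym_norm n (l1m_V 2) (l1m_N 2) v \<le> C"
    and u: "u \<in> sym_tensors n V"
  shows "proj_sym_norm n P N u \<le> C * proj_sym_norm n V (norm_plus V N P) u"
  unfolding np_fun
proof (rule pns_ge_mult[OF _ repsV_ne[OF u] C])
  show "\<forall>x\<in>V. 0 \<le> np x" using np_nonneg by blast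
  fix xs assume xs: "xs \<in> reps n V u"
  then have u_eq: "u = symrep n xs" and xsV: "snd ` set xs \<subseteq> V" by (auto simp: reps_def)
  have bnd: "proj_sym_norm n P N u \<le> C * (\<Sum>(a,x)\<leftarrow>xs. \<bar>a\<bar> * (np x + d) ^ n)" if d: "0 < d" for d
  proof -
    have "reps n P (symrep n xs) \<noteq> {} \<and> proj_sym_norm n P N (symrep n xs) \<le> (\<Sum>(a,x)\<leftarrow>xs. \<bar>a\<bar> * (C * (np x + d) ^ n))"
    proof (rule pns_list)
      show "\<forall>x\<in>P. 0 \<le> N x" using Nnn PV by blast
      fix a x assume "(a, x) \<in> set xs"
      then have xV: "x \<in> V" using xsV by force
      show "reps n P (symrep n [(1, x)]) \<noteq> {} \<and> proj_sym_norm n P N (symrep n [(1, x)]) \<le> C * (np x + d) ^ n"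
        using repsP_single[OF xV] single_bound[OF n C H xV d] by simp
    qed
    then show ?thesis using u_eq by (simp add: sum_mult_C)
  qed
  have lim: "((\<lambda>d. C * (\<Sum>(a,x)\<leftarrow>xs. \<bar>a\<bar> * (np x + d) ^ n)) \<longlongrightarrow> C * (\<Sum>(a,x)\<leftarrow>xs. \<bar>a\<bar> * np x ^ n)) (at_right (0::real))"
    by (intro tendsto_mult_left tendsto_costsum)
  have "proj_sym_norm n P N u \<le> C * (\<Sum>(a,x)\<leftarrow>xs. \<bar>a\<bar> * np x ^ n)"
  proof (rule tendsto_lowerbound[OF lim])
    show "\<forall>\<^sub>F d in at_right 0. proj_sym_norm n P N u \<le> C * (\<Sum>(a,x)\<leftarrow>xs. \<bar>a\<bar> * (np x + d) ^ n)"
      using eventually_at_right_less[of "0::real"] by (rule eventually_mono) (use bnd in auto)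
  qed simp
  then show "proj_sym_norm n P N u \<le> C * cost n np xs" by (simp add: cost_def)
qed

end


definition posp :: "(nat \<Rightarrow> real) \<Rightarrow> nat \<Rightarrow> real" where "posp x = (\<lambda>i. max (x i) 0)"

lemma posp_diff: "posp x - posp (- x) = x"
  by (auto simp: posp_def fun_eq_iff max_def)

lemma l1like:
  fixes V :: "(nat \<Rightarrow> real) set"
  assumes sub: "subspace V" and nrm: "is_norm_on V N" and P: "P = {x \<in> V. \<forall>i. 0 \<le> x i}"
    and pos: "\<And>x. x \<in> V \<Longrightarrow> posp x \<in> V \<and> posp (- x) \<in> V \<and> N x = N (posp x) + N (posp (- x))"
    and coord: "\<And>x i. x \<in> V \<Longrightarrow> \<bar>x i\<bar> \<le> N x"
  shows "ordered_normed_space V N P \<and> (\<forall>x\<in>V. norm_plus V N P x = N x)"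
proof -
  have Nnn: "\<forall>x\<in>V. 0 \<le> N x" using nrm by (simp add: is_norm_on_def)
  have PV: "P \<subseteq> V" using P by auto
  have posP: "x \<in> V \<Longrightarrow> posp x \<in> P \<and> posp (- x) \<in> P" for x
    using pos[of x] P by (auto simp: posp_def)
  have npl: "norm_plus V N P x \<le> N x" if x: "x \<in> V" for x
  proof -
    have "bdd_below {N y + N z | y z. y \<in> P \<and> z \<in> P \<and> x = y - z}"
    proof (rule bdd_belowI[where m=0])
      fix s assume "s \<in> {N y + N z | y z. y \<in> P \<and> z \<in> P \<and> x = y - z}"
      then obtain y z where "y \<in> P" "z \<in> P" "s = N y + N z" by blast
      then show "0 \<le> s" using Nnn PV by (simp add: add_nonneg_nonneg subset_iff)
    qed
    moreover have "N x \<in> {N y + N z | y z. y \<in> P \<and> z \<in> P \<and> x = y - z}"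
      using posP[OF x] pos[OF x] posp_diff[of x] by force
    ultimately show ?thesis unfolding norm_plus_def by (rule cInf_lower[rotated])
  qed
  have VPP: "V = {y - z | y z. y \<in> P \<and> z \<in> P}"
  proof
    show "V \<subseteq> {y - z | y z. y \<in> P \<and> z \<in> P}"
    proof
      fix x assume "x \<in> V"
      then have "posp x \<in> P" "posp (- x) \<in> P" "x = posp x - posp (- x)" using posP posp_diff[of x] by auto
      then show "x \<in> {y - z | y z. y \<in> P \<and> z \<in> P}" by blast
    qed
    show "{y - z | y z. y \<in> P \<and> z \<in> P} \<subseteq> V"
      using PV sub by (auto intro: subspace_diff)
  qed
  have closed: "\<forall>s x. (\<forall>k. s k \<in> P) \<and> x \<in> V \<and> (\<lambda>k. N (s k - x)) \<longlonglongrightarrow> 0 \<longrightarrow> x \<in> P"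
  proof (intro allI impI)
    fix s x assume h: "(\<forall>k. s k \<in> P) \<and> x \<in> V \<and> (\<lambda>k. N (s k - x)) \<longlonglongrightarrow> 0"
    have "0 \<le> x i" for i
    proof -
      have sV: "s k - x \<in> V" for k using h PV sub by (auto intro: subspace_diff)
      have "(\<lambda>k. s k i - x i) \<longlonglongrightarrow> 0"
      proof (rule Lim_null_comparison[OF _ conjunct2[OF conjunct2[OF h]]])
        show "\<forall>\<^sub>F k in sequentially. norm (s k i - x i) \<le> N (s k - x)"
          using coord[OF sV] by (simp add: eventually_sequentially)
      qed
      then have "(\<lambda>k. s k i) \<longlonglongrightarrow> x i"
        using tendsto_add[OF _ tendsto_const[of "x i"]] by fastforce
      moreover have "\<forall>k. 0 \<le> s k i" using h P by auto
      ultimately show ?thesis by (intro LIMSEQ_le_const) auto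
    qed
    then show "x \<in> P" using h P by auto
  qed
  have bdd: "bdd_above {norm_plus V N P x | x. x \<in> V \<and> N x \<le> 1}"
    by (rule bdd_aboveI[where M=1]) (use npl in force)
  have ons: "ordered_normed_space V N P"
    unfolding ordered_normed_space_def
  proof (intro conjI)
    show "\<forall>x\<in>P. \<forall>y\<in>P. x + y \<in> P"
      using P sub by (auto intro: subspace_add add_nonneg_nonneg)
    show "\<forall>x\<in>P. \<forall>c::real. 0 \<le> c \<longrightarrow> c *\<^sub>R x \<in> P"
    proof (intro ballI allI impI)
      fix x and c :: real assume x: "x \<in> P" and c: "0 \<le> c"
      have "c *\<^sub>R x \<in> V" using x P sub by (auto intro: subspace_scale)
      moreover have "\<forall>i. 0 \<le> (c *\<^sub>R x) i" using x P c by (simp add: scaleR_fun_def)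
      ultimately show "c *\<^sub>R x \<in> P" using P by simp
    qed
  qed (rule sub nrm PV closed VPP bdd)+
  interpret ons V N P using ons by (simp add: ons_def)
  have "\<forall>x\<in>V. norm_plus V N P x = N x"
  proof
    fix x assume x: "x \<in> V"
    show "norm_plus V N P x = N x" using npl[OF x] np_ge[OF x] unfolding np_def by linarith
  qed
  then show ?thesis using ons by blast
qed

lemma l1m_ons:
  shows "ordered_normed_space (l1m_V m) (l1m_N m) (l1m_P m) \<and>
    (\<forall>x\<in>l1m_V m. norm_plus (l1m_V m) (l1m_N m) (l1m_P m) x = l1m_N m x)"
proof (rule l1like)
  show "subspace (l1m_V m)"
    by (auto simp: subspace_def l1m_V_def scaleR_fun_def)
  show "is_norm_on (l1m_V m) (l1m_N m)"
    unfolding is_norm_on_def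
  proof (intro conjI ballI allI)
    fix x assume x: "x \<in> l1m_V m"
    show "0 \<le> l1m_N m x" by (simp add: l1m_N_def sum_nonneg)
    show "(l1m_N m x = 0) = (x = 0)"
    proof
      assume "l1m_N m x = 0"
      then have "\<forall>i<m. x i = 0" by (simp add: l1m_N_def sum_nonneg_eq_0_iff)
      show "x = 0"
      proof (rule ext)
        fix i show "x i = 0 i" using x \<open>\<forall>i<m. x i = 0\<close> by (cases "i < m") (auto simp: l1m_V_def)
      qed
    qed (simp add: l1m_N_def)
    fix c show "l1m_N m (c *\<^sub>R x) = \<bar>c\<bar> * l1m_N m x"
      by (simp add: l1m_N_def scaleR_fun_def abs_mult sum_distrib_left)
  next
    fix x y assume "x \<in> l1m_V m" "y \<in> l1m_V m"
    show "l1m_N m (x + y) \<le> l1m_N m x + l1m_N m y"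
      unfolding l1m_N_def sum.distrib[symmetric] by (rule sum_mono) (simp add: abs_triangle_ineq)
  qed
  show "l1m_P m = {x \<in> l1m_V m. \<forall>i. 0 \<le> x i}" by (simp add: l1m_P_def)
  fix x assume x: "x \<in> l1m_V m"
  show "posp x \<in> l1m_V m \<and> posp (- x) \<in> l1m_V m \<and> l1m_N m x = l1m_N m (posp x) + l1m_N m (posp (- x))"
    using x by (auto simp: l1m_V_def posp_def l1m_N_def sum.distrib[symmetric] intro!: sum.cong)
  fix i show "\<bar>x i\<bar> \<le> l1m_N m x"
  proof (cases "i < m")
    case True then show ?thesis unfolding l1m_N_def by (intro member_le_sum) auto
  next
    case False then show ?thesis using x by (simp add: l1m_V_def l1m_N_def sum_nonneg)
  qed
qed

lemma l1_coord: "x \<in> l1_V \<Longrightarrow> \<bar>x i\<bar> \<le> l1_N x"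
  unfolding l1_V_def l1_N_def using sum_le_suminf[of "\<lambda>i. \<bar>x i\<bar>" "{i}"] by simp

lemma l1_ons:
  shows "ordered_normed_space l1_V l1_N l1_P \<and> (\<forall>x\<in>l1_V. norm_plus l1_V l1_N l1_P x = l1_N x)"
proof (rule l1like)
  have addV: "x \<in> l1_V \<Longrightarrow> y \<in> l1_V \<Longrightarrow> x + y \<in> l1_V" for x y
  proof -
    assume "x \<in> l1_V" "y \<in> l1_V"
    then have "summable (\<lambda>i. \<bar>x i\<bar> + \<bar>y i\<bar>)" by (intro summable_add) (auto simp: l1_V_def)
    then have "summable (\<lambda>i. \<bar>x i + y i\<bar>)"
      by (rule summable_comparison_test'[where N=0]) (simp add: abs_triangle_ineq)
    then show "x + y \<in> l1_V" by (simp add: l1_V_def)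
  qed
  show "subspace l1_V"
    unfolding subspace_def
  proof (intro conjI ballI allI)
    show "0 \<in> l1_V" by (simp add: l1_V_def)
    fix c x assume x: "x \<in> l1_V"
    show "c *\<^sub>R x \<in> l1_V" using summable_mult[of _ "\<bar>c\<bar>"] x
      by (simp add: l1_V_def scaleR_fun_def abs_mult)
  next
    fix x y assume "x \<in> l1_V" "y \<in> l1_V" then show "x + y \<in> l1_V" by (rule addV)
  qed
  show "is_norm_on l1_V l1_N"
    unfolding is_norm_on_def
  proof (intro conjI ballI allI)
    fix x assume x: "x \<in> l1_V"
    then have sx: "summable (\<lambda>i. \<bar>x i\<bar>)" by (simp add: l1_V_def)
    show "0 \<le> l1_N x" unfolding l1_N_def by (rule suminf_nonneg[OF sx]) simp
    show "(l1_N x = 0) = (x = 0)"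
      unfolding l1_N_def using suminf_eq_zero_iff[OF sx] by (auto simp: fun_eq_iff)
    fix c show "l1_N (c *\<^sub>R x) = \<bar>c\<bar> * l1_N x"
      unfolding l1_N_def using suminf_mult[OF sx, of "\<bar>c\<bar>"] by (simp add: scaleR_fun_def abs_mult)
  next
    fix x y assume x: "x \<in> l1_V" and y: "y \<in> l1_V"
    have sx: "summable (\<lambda>i. \<bar>x i\<bar>)" "summable (\<lambda>i. \<bar>y i\<bar>)" "summable (\<lambda>i. \<bar>(x+y) i\<bar>)"
      using x y addV[OF x y] by (auto simp: l1_V_def)
    have "l1_N (x + y) \<le> (\<Sum>i. \<bar>x i\<bar> + \<bar>y i\<bar>)"
      unfolding l1_N_def by (rule suminf_le) (use sx summable_add[OF sx(1,2)] in \<open>auto simp: abs_triangle_ineq\<close>)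
    also have "\<dots> = l1_N x + l1_N y" unfolding l1_N_def using suminf_add[OF sx(1,2)] by simp
    finally show "l1_N (x + y) \<le> l1_N x + l1_N y" .
  qed
  show "l1_P = {x \<in> l1_V. \<forall>i. 0 \<le> x i}" by (simp add: l1_P_def)
  fix x assume x: "x \<in> l1_V"
  then have sx: "summable (\<lambda>i. \<bar>x i\<bar>)" by (simp add: l1_V_def)
  have s1: "summable (\<lambda>i. \<bar>posp x i\<bar>)" "summable (\<lambda>i. \<bar>posp (- x) i\<bar>)"
    by (rule summable_comparison_test'[OF sx, where N=0], simp add: posp_def)+
  show "posp x \<in> l1_V \<and> posp (- x) \<in> l1_V \<and> l1_N x = l1_N (posp x) + l1_N (posp (- x))"
    using s1 suminf_add[OF s1] by (auto simp: l1_V_def l1_N_def posp_def intro!: suminf_cong)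
  fix i show "\<bar>x i\<bar> \<le> l1_N x" by (rule l1_coord[OF x])
qed



lemma cost_cong: "\<forall>x\<in>S. N x = N' x \<Longrightarrow> snd ` set xs \<subseteq> S \<Longrightarrow> cost n N xs = cost n N' xs"
  by (induction xs) auto

lemma pns_cong:
  assumes "\<forall>x\<in>S. N x = N' x"
  shows "proj_sym_norm n S N u = proj_sym_norm n S N' u"
proof -
  have "cost n N ` reps n S u = cost n N' ` reps n S u"
    using cost_cong[OF assms] by (intro image_cong) (auto simp: reps_def)
  then show ?thesis by (simp add: pns_eq)
qed

lemma div_bound:
  fixes x :: ereal
  assumes "x \<le> ereal (r * d)" "0 \<le> r" "0 \<le> d"
  shows "x / ereal d \<le> ereal r"
proof (cases "d = 0")
  case True
  then have "x \<le> 0" using assms(1) by (simp add: zero_ereal_def)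
  then show ?thesis using True assms(2)
    by (cases x) (auto simp: zero_ereal_def)
next
  case False
  then have d: "0 < d" using assms(3) by simp
  show ?thesis
  proof (cases x)
    case (real s)
    then have "s \<le> r * d" using assms(1) by simp
    then show ?thesis using real d by (simp add: divide_le_eq mult.commute)
  qed (use assms(1) d in auto)
qed

context ons
begin

lemma ratio_le_C:
  assumes C: "0 \<le> C" and h: "\<And>u. u \<in> sym_tensors n V \<Longrightarrow> proj_sym_norm n P N u \<le> C * proj_sym_norm n V N u"
  shows "c_pss n V N P \<le> ereal C"
  unfolding c_pss_def
proof (rule SUP_least)
  fix u assume "u \<in> sym_tensors n V - {\<lambda>_. 0}"
  then have u: "u \<in> sym_tensors n V" by simp
  have nn: "0 \<le> proj_sym_norm n V N u" by (rule pns_nonneg[OF Nnn repsV_ne[OF u]])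
  have "proj_sym_norm n P N u / proj_sym_norm n V N u \<le> C"
  proof (cases "proj_sym_norm n V N u = 0")
    case True then show ?thesis using C by simp
  next
    case False
    then have "0 < proj_sym_norm n V N u" using nn by simp
    then show ?thesis using h[OF u] by (simp add: divide_le_eq mult.commute)
  qed
  then show "ereal (proj_sym_norm n P N u / proj_sym_norm n V N u) \<le> ereal C" by simp
qed

lemma le_gamma:
  assumes eq: "\<forall>x\<in>V. norm_plus V N P x = N x"
  shows "c_pss n V N P \<le> gamma_on TYPE('a) n"
  unfolding gamma_on_def
proof (rule INF_greatest)
  fix C assume "C \<in> {C::real. 0 \<le> C \<and>
      (\<forall>(V::'a set) N P. ordered_normed_space V N P \<longrightarrow>
         (\<forall>u\<in>sym_tensors n V. proj_sym_norm n P N u \<le> C * proj_sym_norm n V (norm_plus V N P) u))}"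
  then have C: "0 \<le> C" and h: "\<forall>u\<in>sym_tensors n V. proj_sym_norm n P N u \<le> C * proj_sym_norm n V (norm_plus V N P) u"
    using ons by auto
  have "proj_sym_norm n V (norm_plus V N P) u = proj_sym_norm n V N u" for u
    by (rule pns_cong[OF eq])
  then show "c_pss n V N P \<le> ereal C" using h by (intro ratio_le_C[OF C]) auto
qed

lemma cost_np: "snd ` set xs \<subseteq> V \<Longrightarrow> cost n np xs \<le> cp ^ n * cost n N xs"
proof (induction xs)
  case (Cons p xs)
  obtain a x where p: "p = (a,x)" by force
  have x: "x \<in> V" using Cons.prems p by auto
  have "np x ^ n \<le> (cp * N x) ^ n" using np_le_cp[OF x] np_nonneg[OF x] by (intro power_mono) auto
  then have "\<bar>a\<bar> * np x ^ n \<le> \<bar>a\<bar> * (cp ^ n * N x ^ n)" by (simp add: mult_left_mono power_mult_distrib)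
  then show ?case using Cons p by (auto simp: algebra_simps)
qed simp

lemma npnorm_le: "u \<in> sym_tensors n V \<Longrightarrow> proj_sym_norm n V np u \<le> cp ^ n * proj_sym_norm n V N u"
proof -
  assume u: "u \<in> sym_tensors n V"
  have npnn: "\<forall>x\<in>V. 0 \<le> np x" using np_nonneg by blast
  show ?thesis
  proof (rule pns_ge_mult[OF Nnn repsV_ne[OF u]])
    show "0 \<le> cp ^ n" using cp_nonneg by simp
    fix xs assume xs: "xs \<in> reps n V u"
    show "proj_sym_norm n V np u \<le> cp ^ n * cost n N xs"
    proof -
      have "snd ` set xs \<subseteq> V" using xs by (simp add: reps_def)
      then show ?thesis using pns_le[OF npnn xs] cost_np[where xs=xs and n=n] by linarith
    qed
  qed
qed

lemma ratio_general:
  assumes n: "1 \<le> n" and r: "0 \<le> r" and c2: "c_pss n (l1m_V 2) (l1m_N 2) (l1m_P 2) \<le> ereal r"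
  shows "c_pss n V N P \<le> ereal (r * cp ^ n)"
proof (rule ratio_le_C)
  show "0 \<le> r * cp ^ n" using r cp_nonneg by simp
  have H: "\<forall>v\<in>sym_tensors n (l1m_V 2) - {\<lambda>_. 0}.
        proj_sym_norm n (l1m_P 2) (l1m_N 2) v / proj_sym_norm n (l1m_V 2) (l1m_N 2) v \<le> r"
    using c2 unfolding c_pss_def SUP_le_iff by simp
  fix u assume u: "u \<in> sym_tensors n V"
  have "proj_sym_norm n P N u \<le> r * proj_sym_norm n V np u"
    using main_bound[OF n r H u] np_fun by simp
  also have "\<dots> \<le> r * (cp ^ n * proj_sym_norm n V N u)"
    using npnorm_le[OF u] r by (simp add: mult_left_mono)
  finally show "proj_sym_norm n P N u \<le> r * cp ^ n * proj_sym_norm n V N u" by (simp add: algebra_simps)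
qed

end

lemma gamma_le:
  assumes n: "1 \<le> n" and C: "0 \<le> C" and c2: "c_pss n (l1m_V 2) (l1m_N 2) (l1m_P 2) \<le> ereal C"
  shows "gamma_on TYPE('a::real_vector) n \<le> ereal C"
  unfolding gamma_on_def
proof (rule INF_lower2)
  have H: "\<forall>v\<in>sym_tensors n (l1m_V 2) - {\<lambda>_. 0}.
        proj_sym_norm n (l1m_P 2) (l1m_N 2) v / proj_sym_norm n (l1m_V 2) (l1m_N 2) v \<le> C"
    using c2 unfolding c_pss_def SUP_le_iff by simp
  show "C \<in> {C::real. 0 \<le> C \<and>
      (\<forall>(V::'a set) N P. ordered_normed_space V N P \<longrightarrow>
         (\<forall>u\<in>sym_tensors n V. proj_sym_norm n P N u \<le> C * proj_sym_norm n V (norm_plus V N P) u))}"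
    using C ons.main_bound[OF _ n C H] by (auto simp: ons_def)
qed simp

lemma compare:
  fixes V V2 :: "'a::real_vector set"
  assumes o1: "ordered_normed_space V N P" and o2: "ordered_normed_space V2 N2 P2"
    and VV: "V2 \<subseteq> V" and NN: "\<forall>x\<in>V2. N x = N2 x"
    and Q: "linear Q" and QV: "\<And>x. x \<in> V \<Longrightarrow> Q x \<in> V2 \<and> N2 (Q x) \<le> N x"
    and QP: "\<And>x. x \<in> P \<Longrightarrow> Q x \<in> P2" and Qid: "\<And>x. x \<in> V2 \<Longrightarrow> Q x = x"
  shows "c_pss n V2 N2 P2 \<le> c_pss n V N P"
  unfolding c_pss_def
proof (rule SUP_mono)
  interpret A: ons V N P using o1 by (simp add: ons_def)
  interpret B: ons V2 N2 P2 using o2 by (simp add: ons_def)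
  fix u assume "u \<in> sym_tensors n V2 - {\<lambda>_. 0}"
  then have u2: "u \<in> sym_tensors n V2" and nz: "u \<noteq> (\<lambda>_. 0)" by auto
  then obtain xs where xs: "u = symrep n xs" "snd ` set xs \<subseteq> V2" by (auto simp: sym_tensors_def)
  have u1: "u \<in> sym_tensors n V" using xs VV by (auto simp: sym_tensors_def)
  have pushu: "push Q u = u"
  proof -
    have "mapl Q xs = xs" unfolding mapl_def using xs(2) Qid by (intro map_idI) auto
    then show ?thesis using symrep_mapl[OF Q, of n xs] xs(1) by simp
  qed
  have e1: "proj_sym_norm n V2 N2 u \<le> proj_sym_norm n V N u"
    using pns_push[OF Q B.Nnn A.Nnn _ A.repsV_ne[OF u1]] QV pushu by auto
  have e2: "proj_sym_norm n V N u \<le> proj_sym_norm n V2 N2 u"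
  proof (rule pns_ge[OF B.repsV_ne[OF u2]])
    fix ys assume ys: "ys \<in> reps n V2 u"
    then have "ys \<in> reps n V u" using VV by (auto simp: reps_def)
    then have "proj_sym_norm n V N u \<le> cost n N ys" by (rule pns_le[OF A.Nnn])
    also have "\<dots> = cost n N2 ys" using cost_cong[OF NN] ys by (auto simp: reps_def)
    finally show "proj_sym_norm n V N u \<le> cost n N2 ys" .
  qed
  have e3: "proj_sym_norm n P2 N2 u \<le> proj_sym_norm n P N u"
  proof -
    have "\<forall>x\<in>P2. 0 \<le> N2 x" "\<forall>x\<in>P. 0 \<le> N x" using A.Nnn B.Nnn A.PV B.PV by blast+
    from pns_push[OF Q this _ A.repsP_ne[OF u1]] show ?thesis using QV QP pushu A.PV by auto
  qed
  have nn: "0 \<le> proj_sym_norm n V2 N2 u" by (rule pns_nonneg[OF B.Nnn B.repsV_ne[OF u2]])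
  have "proj_sym_norm n P2 N2 u / proj_sym_norm n V2 N2 u \<le> proj_sym_norm n P N u / proj_sym_norm n V N u"
    using e1 e2 e3 nn by (simp add: divide_right_mono)
  then show "\<exists>m\<in>sym_tensors n V - {\<lambda>_. 0}. ereal (proj_sym_norm n P2 N2 u / proj_sym_norm n V2 N2 u)
      \<le> ereal (proj_sym_norm n P N m / proj_sym_norm n V N m)"
    using u1 nz by auto
qed



definition Q2 :: "(nat \<Rightarrow> real) \<Rightarrow> nat \<Rightarrow> real" where "Q2 v = (\<lambda>i. if i < 2 then v i else 0)"

lemma Q2_linear: "linear Q2"
  by (rule linearI) (auto simp: Q2_def fun_eq_iff scaleR_fun_def)

lemma sum2: "(\<Sum>i<2. f i) = f 0 + f (1::nat)" by (simp add: numeral_2_eq_2)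

lemma N2_Q2: "l1m_N 2 (Q2 x) = (\<Sum>i<2. \<bar>x i\<bar>)" by (simp add: l1m_N_def Q2_def)

lemma c2_le_m:
  assumes m: "2 \<le> m"
  shows "c_pss n (l1m_V 2) (l1m_N 2) (l1m_P 2) \<le> c_pss n (l1m_V m) (l1m_N m) (l1m_P m)"
proof (rule compare[OF conjunct1[OF l1m_ons] conjunct1[OF l1m_ons] _ _ Q2_linear])
  show "l1m_V 2 \<subseteq> l1m_V m" using m by (auto simp: l1m_V_def)
  show "\<forall>x\<in>l1m_V 2. l1m_N m x = l1m_N 2 x"
  proof
    fix x assume x: "x \<in> l1m_V 2"
    show "l1m_N m x = l1m_N 2 x" unfolding l1m_N_def
      by (rule sum.mono_neutral_left[symmetric]) (use x m in \<open>auto simp: l1m_V_def\<close>)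
  qed
  fix x assume x: "x \<in> l1m_V m"
  have "l1m_N 2 (Q2 x) = (\<Sum>i<2. \<bar>x i\<bar>)" by (rule N2_Q2)
  also have "\<dots> \<le> l1m_N m x" unfolding l1m_N_def
    by (rule sum_mono2) (use m in auto)
  finally have "l1m_N 2 (Q2 x) \<le> l1m_N m x" .
  then show "Q2 x \<in> l1m_V 2 \<and> l1m_N 2 (Q2 x) \<le> l1m_N m x" by (auto simp: Q2_def l1m_V_def)
next
  fix x assume "x \<in> l1m_P m" then show "Q2 x \<in> l1m_P 2" by (auto simp: Q2_def l1m_P_def l1m_V_def)
next
  fix x assume "x \<in> l1m_V 2" then show "Q2 x = x" by (auto simp: Q2_def l1m_V_def fun_eq_iff)
qed

lemma V2_l1N: "x \<in> l1m_V 2 \<Longrightarrow> l1_N x = (\<Sum>i<2. \<bar>x i\<bar>)"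
  unfolding l1_N_def by (rule suminf_finite) (auto simp: l1m_V_def)

lemma c2_le_l1:
  shows "c_pss n (l1m_V 2) (l1m_N 2) (l1m_P 2) \<le> c_pss n l1_V l1_N l1_P"
proof (rule compare[OF conjunct1[OF l1_ons] conjunct1[OF l1m_ons] _ _ Q2_linear])
  show "l1m_V 2 \<subseteq> l1_V"
  proof
    fix x assume x: "x \<in> l1m_V 2"
    have "summable (\<lambda>i. \<bar>x i\<bar>)" by (rule summable_finite[of "{..<2}"]) (use x in \<open>auto simp: l1m_V_def\<close>)
    then show "x \<in> l1_V" by (simp add: l1_V_def)
  qed
  show "\<forall>x\<in>l1m_V 2. l1_N x = l1m_N 2 x" using V2_l1N by (simp add: l1m_N_def)
  fix x assume x: "x \<in> l1_V"
  have "l1m_N 2 (Q2 x) = (\<Sum>i<2. \<bar>x i\<bar>)" by (rule N2_Q2)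
  also have "\<dots> \<le> l1_N x" unfolding l1_N_def
    by (rule sum_le_suminf) (use x in \<open>auto simp: l1_V_def\<close>)
  finally have "l1m_N 2 (Q2 x) \<le> l1_N x" .
  then show "Q2 x \<in> l1m_V 2 \<and> l1m_N 2 (Q2 x) \<le> l1_N x" by (auto simp: Q2_def l1m_V_def)
next
  fix x assume "x \<in> l1_P" then show "Q2 x \<in> l1m_P 2" by (auto simp: Q2_def l1_P_def l1m_P_def l1m_V_def)
next
  fix x assume "x \<in> l1m_V 2" then show "Q2 x = x" by (auto simp: Q2_def l1m_V_def fun_eq_iff)
qed

definition e0 :: "nat \<Rightarrow> real" where "e0 = (\<lambda>i. if i = 0 then 1 else 0)"

lemma e0_P2: "e0 \<in> l1m_P 2" by (auto simp: e0_def l1m_P_def l1m_V_def)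
lemma e0_V2: "e0 \<in> l1m_V 2" by (auto simp: e0_def l1m_V_def)
lemma e0_N: "l1m_N 2 e0 = 1" by (simp add: N2_eq e0_def)

lemma c2_nonneg: "0 \<le> c_pss n (l1m_V 2) (l1m_N 2) (l1m_P 2)"
proof -
  define u0 where "u0 = symrep n [(1,e0)]"
  have "u0 (\<lambda>v. v 0) = 1" using linear_eval by (simp add: u0_def symrep_def e0_def)
  then have nz: "u0 \<noteq> (\<lambda>_. 0)" by auto
  have uS: "u0 \<in> sym_tensors n (l1m_V 2)" using e0_V2 by (auto simp: sym_tensors_def u0_def)
  have r1: "[(1,e0)] \<in> reps n (l1m_P 2) u0" "[(1,e0)] \<in> reps n (l1m_V 2) u0"
    using e0_P2 e0_V2 by (auto simp: reps_def u0_def)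
  have "0 \<le> proj_sym_norm n (l1m_P 2) (l1m_N 2) u0" "0 \<le> proj_sym_norm n (l1m_V 2) (l1m_N 2) u0"
    using pns_nonneg[of _ "l1m_N 2"] r1 N2_nonneg by blast+
  then have "0 \<le> ereal (proj_sym_norm n (l1m_P 2) (l1m_N 2) u0 / proj_sym_norm n (l1m_V 2) (l1m_N 2) u0)"
    by simp
  also have "\<dots> \<le> c_pss n (l1m_V 2) (l1m_N 2) (l1m_P 2)"
    unfolding c_pss_def by (rule SUP_upper) (use uS nz in auto)
  finally show ?thesis .
qed

lemma cplus2: "c_plus (l1m_V 2) (l1m_N 2) (l1m_P 2) = 1"
proof -
  have eq: "\<forall>x\<in>l1m_V 2. norm_plus (l1m_V 2) (l1m_N 2) (l1m_P 2) x = l1m_N 2 x"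
    using l1m_ons by blast
  show ?thesis unfolding c_plus_def
  proof (rule cSup_eq_maximum)
    show "1 \<in> {norm_plus (l1m_V 2) (l1m_N 2) (l1m_P 2) x |x. x \<in> l1m_V 2 \<and> l1m_N 2 x \<le> 1}"
      using eq e0_V2 e0_N by force
    fix s assume "s \<in> {norm_plus (l1m_V 2) (l1m_N 2) (l1m_P 2) x |x. x \<in> l1m_V 2 \<and> l1m_N 2 x \<le> 1}"
    then show "s \<le> 1" using eq by force
  qed
qed

lemma sup_bounds:
  assumes n: "1 \<le> n" and r: "0 \<le> r" and c2: "c_pss n (l1m_V 2) (l1m_N 2) (l1m_P 2) \<le> ereal r"
  shows "gamma_on TYPE('a::real_vector) n \<le> ereal r \<and> sup_ratio_on TYPE('a) n \<le> ereal r
       \<and> sup_unit_on TYPE('a) n \<le> ereal r"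
proof (intro conjI)
  show "gamma_on TYPE('a::real_vector) n \<le> ereal r" by (rule gamma_le[OF n r c2])
  show "sup_ratio_on TYPE('a) n \<le> ereal r"
    unfolding sup_ratio_on_def
  proof (rule Sup_least)
    fix x assume "x \<in> {c_pss n V N P / ereal (c_plus V N P ^ n) | (V::'a set) N P. ordered_normed_space V N P}"
    then obtain V :: "'a set" and N P where x: "x = c_pss n V N P / ereal (c_plus V N P ^ n)"
      and o: "ordered_normed_space V N P" by blast
    interpret ons V N P using o by (simp add: ons_def)
    have "c_pss n V N P \<le> ereal (r * cp ^ n)" by (rule ratio_general[OF n r c2])
    then show "x \<le> ereal r" unfolding x cp_def[symmetric] using r cp_nonneg by (intro div_bound) auto
  qed
  show "sup_unit_on TYPE('a) n \<le> ereal r"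
    unfolding sup_unit_on_def
  proof (rule Sup_least)
    fix x assume "x \<in> {c_pss n V N P | (V::'a set) N P. ordered_normed_space V N P \<and> c_plus V N P = 1}"
    then obtain V :: "'a set" and N P where x: "x = c_pss n V N P"
      and o: "ordered_normed_space V N P" and c1: "c_plus V N P = 1" by blast
    interpret ons V N P using o by (simp add: ons_def)
    have "c_pss n V N P \<le> ereal (r * cp ^ n)" by (rule ratio_general[OF n r c2])
    then show "x \<le> ereal r" using c1 x by (simp add: cp_def)
  qed
qed

lemma bounds_c2:
  assumes n: "1 \<le> n"
  shows "gamma_on TYPE('b::real_vector) n \<le> c_pss n (l1m_V 2) (l1m_N 2) (l1m_P 2)
       \<and> sup_ratio_on TYPE('b) n \<le> c_pss n (l1m_V 2) (l1m_N 2) (l1m_P 2)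
       \<and> sup_unit_on TYPE('b) n \<le> c_pss n (l1m_V 2) (l1m_N 2) (l1m_P 2)"
proof (cases "c_pss n (l1m_V 2) (l1m_N 2) (l1m_P 2)")
  case (real r)
  then have "0 \<le> r" using c2_nonneg[of n] by simp
  from sup_bounds[OF n this] real show ?thesis by simp
next
  case PInf then show ?thesis by simp
next
  case MInf then show ?thesis using c2_nonneg[of n] by simp
qed

theorem theorem5p3:
  fixes n :: nat
  assumes "1 \<le> n"
  shows "(\<forall>m\<ge>2. c_pss n (l1m_V m) (l1m_N m) (l1m_P m) = gamma_on TYPE(nat \<Rightarrow> real) n)
    \<and> c_pss n l1_V l1_N l1_P = gamma_on TYPE(nat \<Rightarrow> real) n
    \<and> gamma_on TYPE('a::real_vector) n \<le> gamma_on TYPE(nat \<Rightarrow> real) n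
    \<and> sup_ratio_on TYPE('a) n \<le> gamma_on TYPE(nat \<Rightarrow> real) n
    \<and> sup_unit_on TYPE('a) n \<le> gamma_on TYPE(nat \<Rightarrow> real) n
    \<and> sup_ratio_on TYPE(nat \<Rightarrow> real) n = gamma_on TYPE(nat \<Rightarrow> real) n
    \<and> sup_unit_on TYPE(nat \<Rightarrow> real) n = gamma_on TYPE(nat \<Rightarrow> real) n"
proof -
  note n = assms
  define c2 where "c2 = c_pss n (l1m_V 2) (l1m_N 2) (l1m_P 2)"
  define G where "G = gamma_on TYPE(nat \<Rightarrow> real) n"
  have cm_G: "c_pss n (l1m_V m) (l1m_N m) (l1m_P m) \<le> G" for m
  proof -
    interpret ons "l1m_V m" "l1m_N m" "l1m_P m" using l1m_ons by (simp add: ons_def)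
    show ?thesis unfolding G_def by (rule le_gamma) (use l1m_ons in blast)
  qed
  have cl1_G: "c_pss n l1_V l1_N l1_P \<le> G"
  proof -
    interpret ons l1_V l1_N l1_P using l1_ons by (simp add: ons_def)
    show ?thesis unfolding G_def by (rule le_gamma) (use l1_ons in blast)
  qed
  have c2G: "c2 \<le> G" using cm_G[of 2] by (simp add: c2_def)
  have c2nn: "0 \<le> c2" using c2_nonneg by (simp add: c2_def)
  have bN: "gamma_on TYPE(nat \<Rightarrow> real) n \<le> c2 \<and> sup_ratio_on TYPE(nat \<Rightarrow> real) n \<le> c2
       \<and> sup_unit_on TYPE(nat \<Rightarrow> real) n \<le> c2"
    unfolding c2_def by (rule bounds_c2[OF n])
  have bA: "gamma_on TYPE('a) n \<le> c2 \<and> sup_ratio_on TYPE('a) n \<le> c2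
       \<and> sup_unit_on TYPE('a) n \<le> c2"
    unfolding c2_def by (rule bounds_c2[OF n])
  have Gc2: "G = c2"
  proof (rule antisym)
    show "G \<le> c2" using bN by (simp add: G_def)
  qed (rule c2G)
  have m_eq: "\<forall>m\<ge>2. c_pss n (l1m_V m) (l1m_N m) (l1m_P m) = G"
  proof (intro allI impI)
    fix m :: nat assume "2 \<le> m"
    from c2_le_m[OF this, of n] have "G \<le> c_pss n (l1m_V m) (l1m_N m) (l1m_P m)"
      using Gc2 by (simp add: c2_def)
    then show "c_pss n (l1m_V m) (l1m_N m) (l1m_P m) = G" using cm_G[of m] by (rule antisym[rotated])
  qed
  have l1_eq: "c_pss n l1_V l1_N l1_P = G"
  proof (rule antisym[OF cl1_G])
    show "G \<le> c_pss n l1_V l1_N l1_P" using c2_le_l1[of n] Gc2 by (simp add: c2_def)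
  qed
  have sr_ge: "c2 \<le> sup_ratio_on TYPE(nat \<Rightarrow> real) n"
  proof -
    have "c2 / ereal (c_plus (l1m_V 2) (l1m_N 2) (l1m_P 2) ^ n) = c2"
      using cplus2 by (simp add: divide_ereal_def one_ereal_def[symmetric])
    moreover have "c2 / ereal (c_plus (l1m_V 2) (l1m_N 2) (l1m_P 2) ^ n) \<le> sup_ratio_on TYPE(nat \<Rightarrow> real) n"
      unfolding sup_ratio_on_def c2_def by (rule Sup_upper) (use conjunct1[OF l1m_ons] in blast)
    ultimately show ?thesis by simp
  qed
  have su_ge: "c2 \<le> sup_unit_on TYPE(nat \<Rightarrow> real) n"
    unfolding sup_unit_on_def c2_def by (rule Sup_upper) (use conjunct1[OF l1m_ons] cplus2 in blast)
  have r1: "sup_ratio_on TYPE(nat \<Rightarrow> real) n = G"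
    using sr_ge bN Gc2 by (intro antisym) simp_all
  have r2: "sup_unit_on TYPE(nat \<Rightarrow> real) n = G"
    using su_ge bN Gc2 by (intro antisym) simp_all
  show ?thesis
    unfolding G_def[symmetric] using m_eq l1_eq bA Gc2 r1 r2 by simp
qed


end
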